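(* Let $T$ be a rooted edge-weighted full binary tree with $n$ leaves, all root-to-leaf paths of weight $1$, every edge of weight at least $\tau\frac{\log n}{\sqrt{n}}$ for a sufficiently large constant $\tau$, whose topology is known, with experiment outcomes on all triples of leaves generated by the homogeneous noise model. Let $P=(v_0=r,v_1,\dots,v_{\ell^\ast})$ be the rightmost root-to-leaf path and $f$ the largest index such that $v_f$ is heavy. Suppose $v$ is an internal vertex lying in the left subtree of $v_\ell$ for some $1\le\ell\le f$. Then there is a procedure (Reconstruct-height-left-heavy) which, given $v$, with high probability reconstructs $h_v$ up to additive error $O\big(\alpha^{-1}\sqrt{\log n/n}\big)$.
   Context: Distances $d$ between leaves are path weights. For each unordered triple of distinct leaves a single experiment $Q(a,b,c)$ returns one pair, independently across triples, with $\Pr[Q(a,b,c)=(a,b)]=\frac{d(a,c)+d(b,c)}{2(d(a,b)+d(b,c)+d(a,c))}$ (and symmetrically). For a vertex $v$, $h_v$ is the weight of a path from $v$ to any leaf below it; $\mathsf{NL}(v)$ is the number of leaves in the subtree rooted at $v$. Children of each internal vertex are ordered so that the right child $\mathsf{rc}$ and left child $\mathsf{lc}$ satisfy $\mathsf{NL}(\mathsf{rc})\ge\mathsf{NL}(\mathsf{lc})$; the left subtree of a vertex is the subtree rooted at its left child; the rightmost path starts at the root and always goes to the right child. A vertex is heavy if $\mathsf{NL}(v)\ge\alpha n+1$ with $\alpha=\frac16$. "With high probability" means probability $1-o(1)$. *)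

theory Defs
  imports "HOL-Probability.Probability"
begin

text \<open>Node wl l wr r : wl is the weight of the edge to the left child l,
  wr the weight of the edge to the right child r.\<close>

datatype 'w btree = Leaf nat | Node 'w "'w btree" 'w "'w btree"

fun leafl :: "'w btree \<Rightarrow> nat list" where
  "leafl (Leaf x) = [x]"
| "leafl (Node _ l _ r) = leafl l @ leafl r"

definition leaves :: "'w btree \<Rightarrow> nat set" where
  "leaves t = set (leafl t)"

definition NL :: "'w btree \<Rightarrow> nat" where
  "NL t = length (leafl t)"

definition topology :: "real btree \<Rightarrow> unit btree" where
  "topology t = map_btree (\<lambda>_. ()) t"

fun weights :: "'w btree \<Rightarrow> 'w list" where
  "weights (Leaf x) = []"
| "weights (Node wl l wr r) = wl # wr # weights l @ weights r"

fun rootdist :: "real btree \<Rightarrow> nat \<Rightarrow> real" where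
  "rootdist (Leaf x) a = 0"
| "rootdist (Node wl l wr r) a =
     (if a \<in> leaves l then wl + rootdist l a else wr + rootdist r a)"

fun dist_t :: "real btree \<Rightarrow> nat \<Rightarrow> nat \<Rightarrow> real" where
  "dist_t (Leaf x) a b = 0"
| "dist_t (Node wl l wr r) a b =
     (if a \<in> leaves l \<and> b \<in> leaves l then dist_t l a b
      else if a \<in> leaves r \<and> b \<in> leaves r then dist_t r a b
      else if a \<in> leaves l then wl + rootdist l a + wr + rootdist r b
      else wr + rootdist r a + wl + rootdist l b)"

fun ordered :: "'w btree \<Rightarrow> bool" where
  "ordered (Leaf x) = True"
| "ordered (Node _ l _ r) = (NL l \<le> NL r \<and> ordered l \<and> ordered r)"

text \<open>Vertices are addressed by positions: lists of directions from the root
  (False = go to left child, True = go to right child).\<close>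
fun valid_pos :: "'w btree \<Rightarrow> bool list \<Rightarrow> bool" where
  "valid_pos t [] = True"
| "valid_pos (Leaf x) (b # p) = False"
| "valid_pos (Node _ l _ r) (b # p) = valid_pos (if b then r else l) p"

fun sub :: "'w btree \<Rightarrow> bool list \<Rightarrow> 'w btree" where
  "sub t [] = t"
| "sub (Leaf x) (b # p) = Leaf x"
| "sub (Node _ l _ r) (b # p) = sub (if b then r else l) p"

fun is_internal :: "'w btree \<Rightarrow> bool" where
  "is_internal (Leaf x) = False"
| "is_internal (Node _ _ _ _) = True"

definition height_at :: "real btree \<Rightarrow> bool list \<Rightarrow> real" where
  "height_at t p = rootdist (sub t p) (hd (leafl (sub t p)))"

definition alpha :: real where "alpha = 1 / 6"

definition heavy :: "'w btree \<Rightarrow> nat \<Rightarrow> bool list \<Rightarrow> bool" where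
  "heavy t n p \<longleftrightarrow> real (NL (sub t p)) \<ge> alpha * real n + 1"

text \<open>v_k on the rightmost path is the position replicate k True;
  f is the largest index k such that v_k is heavy.\<close>
definition rm_f :: "'w btree \<Rightarrow> nat \<Rightarrow> nat" where
  "rm_f t n = (GREATEST k. valid_pos t (replicate k True) \<and> heavy t n (replicate k True))"

text \<open>For a triple S = {a,b,c}, Q(S) returns the pair
  S - {c} with probability (d(a,c)+d(b,c)) / (2 (d(a,b)+d(b,c)+d(a,c)));
  the double sum over ordered pairs in the denominator equals 2 (d(a,b)+d(b,c)+d(a,c)).\<close>
definition triples :: "nat \<Rightarrow> nat set set" where
  "triples n = {S. S \<subseteq> {0..<n} \<and> card S = 3}"

definition excl_weight :: "real btree \<Rightarrow> nat set \<Rightarrow> nat \<Rightarrow> real" where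
  "excl_weight t S c =
     (if c \<in> S then
        (\<Sum>x\<in>S - {c}. dist_t t x c) /
        (\<Sum>x\<in>S. \<Sum>y\<in>S - {x}. dist_t t x y)
      else 0)"

definition triple_pmf :: "real btree \<Rightarrow> nat set \<Rightarrow> nat set pmf" where
  "triple_pmf t S = map_pmf (\<lambda>c. S - {c}) (embed_pmf (excl_weight t S))"

definition outcome_pmf :: "real btree \<Rightarrow> nat \<Rightarrow> (nat set \<Rightarrow> nat set) pmf" where
  "outcome_pmf t n = Pi_pmf (triples n) {} (triple_pmf t)"

end

theory Submission
  imports Defs "HOL-Real_Asymp.Real_Asymp"
begin


fun pathw :: "real btree \<Rightarrow> bool list \<Rightarrow> real" where
  "pathw t [] = 0"
| "pathw (Leaf x) (b # p) = 0"
| "pathw (Node wl l wr r) (b # p) = (if b then wr + pathw r p else wl + pathw l p)"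

lemma sub_Leaf[simp]: "sub (Leaf x) p = Leaf x"
  by (cases p) auto

lemma sub_append: "sub t (p @ q) = sub (sub t p) q"
  by (induction t p rule: sub.induct) auto

lemma valid_pos_append: "valid_pos t (p @ q) = (valid_pos t p \<and> valid_pos (sub t p) q)"
  by (induction t p rule: valid_pos.induct) (auto simp: valid_pos.simps(1))

lemma leafl_ne[simp]: "leafl t \<noteq> []"
  by (induction t) auto

lemma leaves_Node[simp]: "leaves (Node wl l wr r) = leaves l \<union> leaves r"
  by (simp add: leaves_def)

lemma leaves_sub: "leaves (sub t p) \<subseteq> leaves t"
  by (induction t p rule: sub.induct) auto

lemma distinct_sub: "distinct (leafl t) \<Longrightarrow> distinct (leafl (sub t p))"
  by (induction t p rule: sub.induct) auto

lemma weights_sub: "set (weights (sub t p)) \<subseteq> set (weights t)"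
  by (induction t p rule: sub.induct) auto

lemma ordered_sub: "ordered t \<Longrightarrow> ordered (sub t p)"
  by (induction t p rule: sub.induct) auto

lemma NL_Node[simp]: "NL (Node wl l wr r) = NL l + NL r"
  by (simp add: NL_def)

lemma NL_sub_le: "NL (sub t p) \<le> NL t"
  by (induction t p rule: sub.induct) (auto simp: NL_def)

lemma disj_Node: "distinct (leafl (Node wl l wr r)) \<Longrightarrow> leaves l \<inter> leaves r = {}"
  by (auto simp: leaves_def)

lemma rootdist_sub:
  "distinct (leafl t) \<Longrightarrow> valid_pos t p \<Longrightarrow> a \<in> leaves (sub t p) \<Longrightarrow>
   rootdist t a = pathw t p + rootdist (sub t p) a"
proof (induction t p rule: sub.induct)
  case (3 wl l wr r b p)
  have d: "leaves l \<inter> leaves r = {}" using disj_Node[OF "3.prems"(1)] .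
  show ?case
  proof (cases b)
    case True
    then have "a \<in> leaves r" using "3.prems"(3) leaves_sub[of r p] by auto
    then show ?thesis using True 3 d by auto
  next
    case False
    then have "a \<in> leaves l" using "3.prems"(3) leaves_sub[of l p] by auto
    then show ?thesis using False 3 d by auto
  qed
qed auto

lemma dist_sub:
  "distinct (leafl t) \<Longrightarrow> valid_pos t p \<Longrightarrow> a \<in> leaves (sub t p) \<Longrightarrow> b \<in> leaves (sub t p) \<Longrightarrow>
   dist_t t a b = dist_t (sub t p) a b"
proof (induction t p rule: sub.induct)
  case (3 wl l wr r c p)
  have d: "leaves l \<inter> leaves r = {}" using disj_Node[OF "3.prems"(1)] .
  show ?case
  proof (cases c)
    case True
    then have "a \<in> leaves r" "b \<in> leaves r" using "3.prems" leaves_sub[of r p] by auto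
    then show ?thesis using True 3 d by auto
  next
    case False
    then have "a \<in> leaves l" "b \<in> leaves l" using "3.prems" leaves_sub[of l p] by auto
    then show ?thesis using False 3 d by auto
  qed
qed auto

lemma dist_node:
  assumes "distinct (leafl (Node wl l wr r))" "a \<in> leaves l" "b \<in> leaves r"
  shows "dist_t (Node wl l wr r) a b = rootdist (Node wl l wr r) a + rootdist (Node wl l wr r) b"
    "dist_t (Node wl l wr r) b a = rootdist (Node wl l wr r) a + rootdist (Node wl l wr r) b"
  using assms disj_Node[OF assms(1)] by auto

lemma rootdist_const:
  assumes "distinct (leafl t)" "\<forall>a\<in>leaves t. rootdist t a = 1" "valid_pos t p" "a \<in> leaves (sub t p)"
  shows "rootdist (sub t p) a = 1 - pathw t p"
  using rootdist_sub[OF assms(1,3,4)] assms(2) leaves_sub[of t p] assms(4) by force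

lemma height_at_eq:
  assumes "distinct (leafl t)" "\<forall>a\<in>leaves t. rootdist t a = 1" "valid_pos t p"
  shows "height_at t p = 1 - pathw t p"
proof -
  have "hd (leafl (sub t p)) \<in> leaves (sub t p)" by (simp add: leaves_def)
  then show ?thesis unfolding height_at_def using rootdist_const[OF assms] by blast
qed

lemma lca_dist:
  assumes "distinct (leafl t)" "\<forall>a\<in>leaves t. rootdist t a = 1" "valid_pos t p"
    "sub t p = Node wl l wr r" "a \<in> leaves l" "b \<in> leaves r"
  shows "dist_t t a b = 2 * (1 - pathw t p)" "dist_t t b a = 2 * (1 - pathw t p)"
proof -
  have ab: "a \<in> leaves (sub t p)" "b \<in> leaves (sub t p)" using assms(4,5,6) by auto
  have ds: "distinct (leafl (sub t p))" using distinct_sub[OF assms(1)] .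
  have ra: "rootdist (sub t p) a = 1 - pathw t p" "rootdist (sub t p) b = 1 - pathw t p"
    using rootdist_const[OF assms(1-3)] ab by auto
  show "dist_t t a b = 2 * (1 - pathw t p)"
    using dist_sub[OF assms(1,3) ab] dist_node(1)[of wl l wr r a b] ds assms(4-6) ra by simp
  show "dist_t t b a = 2 * (1 - pathw t p)"
    using dist_sub[OF assms(1,3) ab(2,1)] dist_node(2)[of wl l wr r a b] ds assms(4-6) ra by simp
qed

lemma pathw_Leaf[simp]: "pathw (Leaf x) p = 0"
  by (cases p) auto

lemma pathw_append: "pathw t (p @ q) = pathw t p + pathw (sub t p) q"
  by (induction t p rule: pathw.induct) auto

lemma pathw_nonneg: "\<forall>w\<in>set (weights t). w \<ge> 0 \<Longrightarrow> pathw t p \<ge> 0"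
  by (induction t p rule: pathw.induct) auto

lemma rootdist_nonneg: "\<forall>w\<in>set (weights t). w \<ge> 0 \<Longrightarrow> rootdist t a \<ge> 0"
  by (induction t a rule: rootdist.induct) auto

lemma topo_sub: "sub (map_btree f t) p = map_btree f (sub t p)"
  by (induction t p rule: sub.induct) auto

lemma topo_leafl[simp]: "leafl (map_btree f t) = leafl t"
  by (induction t) auto




lemma triple_prob:
  assumes ne: "a \<noteq> b" "a \<noteq> c" "b \<noteq> c"
    and dab: "dist_t t a b = dab" "dist_t t b a = dab"
    and dac: "dist_t t a c = dac" "dist_t t c a = dac"
    and dbc: "dist_t t b c = dbc" "dist_t t c b = dbc"
    and nn: "dab \<ge> 0" "dac \<ge> 0" "dbc \<ge> 0" and pos: "dab + dbc + dac > 0"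
  shows "pmf (triple_pmf t {a,b,c}) {a,b} = (dac + dbc) / (2 * (dab + dbc + dac))"
proof -
  let ?S = "{a,b,c}"
  let ?f = "excl_weight t ?S"
  have D: "(\<Sum>x\<in>?S. \<Sum>y\<in>?S - {x}. dist_t t x y) = 2 * (dab + dbc + dac)"
    using ne dab dac dbc by (simp add: insert_Diff_if)
  have fa: "?f a = (dab + dac) / (2 * (dab + dbc + dac))"
    unfolding excl_weight_def using ne dab dac dbc D by (simp add: insert_Diff_if)
  have fb: "?f b = (dab + dbc) / (2 * (dab + dbc + dac))"
    unfolding excl_weight_def using ne dab dac dbc D by (simp add: insert_Diff_if)
  have fc: "?f c = (dac + dbc) / (2 * (dab + dbc + dac))"
    unfolding excl_weight_def using ne dab dac dbc D by (simp add: insert_Diff_if add.commute)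
  have f0: "x \<notin> ?S \<Longrightarrow> ?f x = 0" for x unfolding excl_weight_def by simp
  have nonneg: "\<forall>x. ?f x \<ge> 0"
  proof
    fix x show "?f x \<ge> 0"
      using fa fb fc f0[of x] nn pos by (cases "x \<in> ?S") auto
  qed
  have "(\<integral>\<^sup>+x. ennreal (?f x) \<partial>count_space UNIV) = (\<Sum>x\<in>?S. ennreal (?f x))"
    by (rule nn_integral_count_space') (use f0 in auto)
  also have "\<dots> = ennreal (\<Sum>x\<in>?S. ?f x)"
    using nonneg by (simp add: sum_ennreal)
  also have "(\<Sum>x\<in>?S. ?f x) = ?f a + ?f b + ?f c"
    using ne by simp
  also have "\<dots> = 1"
  proof -
    have "?f a + ?f b + ?f c = ((dab + dac) + (dab + dbc) + (dac + dbc)) / (2 * (dab + dbc + dac))"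
      unfolding fa fb fc by (simp add: add_divide_distrib)
    also have "\<dots> = 1" using pos by simp
    finally show ?thesis .
  qed
  finally have int1: "(\<integral>\<^sup>+x. ennreal (?f x) \<partial>count_space UNIV) = 1" by simp
  have pre: "(\<lambda>c'. ?S - {c'}) -` {{a,b}} = {c}"
    using ne by (auto simp: insert_Diff_if split: if_splits)
  have "pmf (triple_pmf t ?S) {a,b} = measure (embed_pmf ?f) {c}"
    unfolding triple_pmf_def pmf_map pre ..
  also have "\<dots> = ?f c"
    by (simp add: measure_pmf_single pmf_embed_pmf[OF nonneg[rule_format] int1])
  finally show ?thesis using fc by simp
qed

definition est :: "nat set set \<Rightarrow> (nat set \<Rightarrow> nat set) \<Rightarrow> (nat set \<Rightarrow> nat set) \<Rightarrow> real" where
  "est I g Q = (\<Sum>S\<in>I. if Q S = g S then 1 else 0) / real (card I)"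

lemma finite_triples: "finite (triples n)"
proof -
  have "triples n \<subseteq> Pow {0..<n}" by (auto simp: triples_def)
  then show ?thesis by (rule finite_subset) simp
qed

lemma conc:
  assumes I: "I \<subseteq> triples n" "I \<noteq> {}"
    and p: "\<And>S. S \<in> I \<Longrightarrow> pmf (triple_pmf t S) (g S) = p"
    and \<delta>: "\<delta> \<ge> 0"
  shows "measure_pmf.prob (outcome_pmf t n) {Q. \<delta> \<le> \<bar>est I g Q - p\<bar>}
           \<le> 2 * exp (- 2 * real (card I) * \<delta>\<^sup>2)"
proof -
  let ?M = "measure_pmf (outcome_pmf t n)"
  let ?X = "\<lambda>S Q. if Q S = g S then 1 else (0::real)"
  have finI: "finite I" using finite_subset[OF I(1) finite_triples] .
  have cpos: "card I > 0" using finI I(2) by (simp add: card_gt_0_iff)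
  have indep0: "prob_space.indep_vars ?M (\<lambda>_. count_space UNIV) (\<lambda>x f. f x) (triples n)"
    unfolding outcome_pmf_def by (rule indep_vars_Pi_pmf[OF finite_triples])
  have indep: "prob_space.indep_vars ?M (\<lambda>_. borel) ?X I"
    by (rule prob_space.indep_vars_compose2[OF measure_pmf.prob_space_axioms
          prob_space.indep_vars_subset[OF measure_pmf.prob_space_axioms indep0 I(1)]]) auto
  have ex: "measure_pmf.expectation (outcome_pmf t n) (?X S) = p" if "S \<in> I" for S
  proof -
    have "measure_pmf.expectation (outcome_pmf t n) (?X S)
        = measure_pmf.expectation (map_pmf (\<lambda>Q. Q S) (outcome_pmf t n)) (\<lambda>x. if x = g S then 1 else 0)"
      by simp
    also have "map_pmf (\<lambda>Q. Q S) (outcome_pmf t n) = triple_pmf t S"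
    proof -
      have "S \<in> triples n" using that I(1) by auto
      then show ?thesis unfolding outcome_pmf_def by (simp add: Pi_pmf_component[OF finite_triples])
    qed
    also have "measure_pmf.expectation (triple_pmf t S) (\<lambda>x. if x = g S then 1 else (0::real))
             = pmf (triple_pmf t S) (g S)"
    proof -
      have "(\<lambda>x. if x = g S then 1 else (0::real)) = indicator {g S}"
        by (auto simp: indicator_def)
      then show ?thesis by (simp add: measure_pmf_single)
    qed
    finally show ?thesis using p[OF that] by simp
  qed
  interpret H: Hoeffding_ineq ?M I ?X "\<lambda>_. 0" "\<lambda>_. 1" "real (card I) * p"
  proof unfold_locales
    show "finite I" by fact
    show "prob_space.indep_vars ?M (\<lambda>_. borel) ?X I" by fact
    show "AE x in ?M. ?X i x \<in> {0..1}" if "i \<in> I" for i by simp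
    show "real (card I) * p \<equiv> \<Sum>i\<in>I. measure_pmf.expectation (outcome_pmf t n) (?X i)"
      using ex by simp
  qed
  have "measure_pmf.prob (outcome_pmf t n) {x\<in>space ?M. real (card I) * \<delta> \<le> \<bar>(\<Sum>i\<in>I. ?X i x) - real (card I) * p\<bar>}
     \<le> 2 * exp (-2 * (real (card I) * \<delta>)\<^sup>2 / (\<Sum>i\<in>I. (1 - 0)\<^sup>2))"
    by (rule H.Hoeffding_ineq_abs_ge) (use \<delta> cpos finI in auto)
  also have "(\<Sum>i\<in>I. (1 - 0::real)\<^sup>2) = real (card I)" by simp
  also have "-2 * (real (card I) * \<delta>)\<^sup>2 / real (card I) = - 2 * real (card I) * \<delta>\<^sup>2"
    using cpos by (simp add: power2_eq_square)
  also have "{x\<in>space ?M. real (card I) * \<delta> \<le> \<bar>(\<Sum>i\<in>I. ?X i x) - real (card I) * p\<bar>}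
      = {Q. \<delta> \<le> \<bar>est I g Q - p\<bar>}"
  proof -
    have "real (card I) * \<delta> \<le> \<bar>s - real (card I) * p\<bar> \<longleftrightarrow> \<delta> \<le> \<bar>s / real (card I) - p\<bar>" for s
    proof -
      have "\<bar>s - real (card I) * p\<bar> = real (card I) * \<bar>s / real (card I) - p\<bar>"
        using cpos by (simp add: field_simps abs_mult[symmetric])
      then show ?thesis using cpos by simp
    qed
    then show ?thesis unfolding est_def by auto
  qed
  finally show ?thesis .
qed




lemma inv_err:
  fixes x m \<delta> :: real
  assumes x: "0 \<le> x" "x \<le> 1" and d: "0 \<le> \<delta>" "\<delta> \<le> 1/12" and m: "\<bar>m - 1/(x+2)\<bar> < \<delta>"
  shows "\<bar>(1/m - 2) - x\<bar> \<le> 12 * \<delta>"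
proof -
  define p where "p = 1/(x+2)"
  have p: "1/3 \<le> p" "p \<le> 1/2" using x by (auto simp: p_def field_simps)
  have m4: "m \<ge> 1/4" using m p d unfolding p_def[symmetric] by linarith
  have x_eq: "x = 1/p - 2" using x by (simp add: p_def)
  have "(1/m - 2) - x = (p - m) / (m * p)" using m4 p unfolding x_eq by (simp add: field_simps)
  also have "\<bar>\<dots>\<bar> = \<bar>p - m\<bar> / (m * p)" using m4 p by (simp add: abs_div)
  also have "\<dots> \<le> \<delta> / (1/12)"
  proof (rule frac_le)
    show "\<bar>p - m\<bar> \<le> \<delta>" using m unfolding p_def[symmetric] by linarith
    show "1/12 \<le> m * p" using mult_mono[OF m4 p(1)] m4 by linarith
  qed (use d in auto)
  finally show ?thesis by simp
qed

lemma prod_err: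
  fixes hu hv m1 m2 \<delta> :: real
  assumes h: "0 < hu" "hu \<le> 1" "0 \<le> hv" "hv \<le> hu" and d: "0 \<le> \<delta>" "\<delta> \<le> 1/12"
    and m1: "\<bar>m1 - 1/(hu+2)\<bar> < \<delta>" and m2: "\<bar>m2 - hu/(hv+2*hu)\<bar> < \<delta>"
  shows "\<bar>(1/m2 - 2) * (1/m1 - 2) - hv\<bar> \<le> 36 * \<delta>"
proof -
  define r where "r = hv / hu"
  have r: "0 \<le> r" "r \<le> 1" using h by (auto simp: r_def field_simps)
  have "hu/(hv+2*hu) = 1/(r+2)" using h by (simp add: r_def field_simps)
  then have e2: "\<bar>(1/m2 - 2) - r\<bar> \<le> 12 * \<delta>" using inv_err[OF r d] m2 by simp
  have e1: "\<bar>(1/m1 - 2) - hu\<bar> \<le> 12 * \<delta>" using inv_err[of hu \<delta> m1] h d m1 by simp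
  define a where "a = 1/m2 - 2"
  define b where "b = 1/m1 - 2"
  have hv_eq: "hv = r * hu" using h by (simp add: r_def)
  have "a * b - r * hu = (a - r) * b + r * (b - hu)" by (simp add: algebra_simps)
  then have "\<bar>a * b - r * hu\<bar> \<le> \<bar>a - r\<bar> * \<bar>b\<bar> + r * \<bar>b - hu\<bar>"
    using r by (simp add: abs_mult[symmetric]) (metis abs_mult abs_of_nonneg abs_triangle_ineq r(1))
  also have "\<dots> \<le> (12 * \<delta>) * 2 + 1 * (12 * \<delta>)"
  proof (rule add_mono)
    have "\<bar>b\<bar> \<le> 2" using e1 h d unfolding b_def by linarith
    then show "\<bar>a - r\<bar> * \<bar>b\<bar> \<le> (12 * \<delta>) * 2"
      using e2 d unfolding a_def by (intro mult_mono) auto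
    show "r * \<bar>b - hu\<bar> \<le> 1 * (12 * \<delta>)"
      using e1 r unfolding b_def by (intro mult_mono) auto
  qed
  finally show ?thesis unfolding a_def b_def hv_eq by simp
qed




lemma lim1: "((\<lambda>n::nat. 4 * exp (- (ln (real n) / 6))) \<longlongrightarrow> 0) sequentially"
  by real_asymp

lemma lim2: "((\<lambda>n::nat. sqrt (ln (real n) / real n)) \<longlongrightarrow> 0) sequentially"
  by real_asymp




definition alg0 :: "unit btree \<Rightarrow> (nat set \<Rightarrow> nat set) \<Rightarrow> bool list \<Rightarrow> real" where
  "alg0 T Q p = (let u = takeWhile id p;
     x0 = hd (leafl (sub T [False])); y0 = hd (leafl (sub T (u @ [False])));
     Z = leaves (sub T (u @ [True]));
     a0 = hd (leafl (sub T (p @ [False]))); b0 = hd (leafl (sub T (p @ [True])));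
     m1 = est ((\<lambda>z. {x0, y0, z}) ` Z) (\<lambda>S. S - {x0}) Q;
     m2 = est ((\<lambda>z. {a0, b0, z}) ` Z) (\<lambda>S. {a0, b0}) Q
   in (1/m2 - 2) * (1/m1 - 2))"

lemma tw_rep: "takeWhile id (replicate l True @ False # q) = replicate l True"
  by (induction l) auto

lemma main:
  fixes t :: "real btree" and n l :: nat and \<tau> \<delta> :: real
  assumes dist: "distinct (leafl t)" and lv: "leaves t = {0..<n}" and ord: "ordered t"
    and rd: "\<forall>a \<in> leaves t. rootdist t a = 1"
    and wt: "\<forall>w \<in> set (weights t). w \<ge> \<tau> * ln (real n) / sqrt (real n)"
    and l1: "1 \<le> l" and lf: "l \<le> rm_f t n"
    and vp: "valid_pos t (replicate l True @ False # q)"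
    and int: "is_internal (sub t (replicate l True @ False # q))"
    and n2: "n \<ge> 2" and tau: "\<tau> > 0" and d: "0 \<le> \<delta>" "\<delta> \<le> 1/12"
  shows "measure_pmf.prob (outcome_pmf t n)
         {Q. \<bar>alg0 (topology t) Q (replicate l True @ False # q)
               - height_at t (replicate l True @ False # q)\<bar> \<le> 36 * \<delta>}
         \<ge> 1 - 4 * exp (- 2 * (real n / 12) * \<delta>\<^sup>2)"
proof -
  define u where "u = replicate l True"
  define p where "p = replicate l True @ False # q"
  have p_eq: "p = u @ False # q" by (simp add: u_def p_def)
  have wpos: "\<forall>w \<in> set (weights t). w > 0"
  proof -
    have "\<tau> * ln (real n) / sqrt (real n) > 0" using tau n2 by (simp add: ln_gt_zero)
    then show ?thesis using wt by force
  qed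
  have wnn: "\<forall>w \<in> set (weights t). w \<ge> 0" using wpos by force
  have NLt: "NL t = n"
    using dist lv distinct_card[OF dist] by (simp add: NL_def leaves_def)
  have vu: "valid_pos t u" and vFq: "valid_pos (sub t u) (False # q)"
    using vp valid_pos_append[of t u "False # q"] by (auto simp: u_def)
  obtain wl L wr R where su: "sub t u = Node wl L wr R"
    using vFq by (cases "sub t u") auto
  have vLq: "valid_pos L q" using vFq su by simp
  define P where "P k \<longleftrightarrow> valid_pos t (replicate k True) \<and> heavy t n (replicate k True)" for k
  have heavy_u: "heavy t n u"
  proof (rule ccontr)
    assume nh: "\<not> heavy t n u"
    have mono: "P k \<Longrightarrow> k < l" for k
    proof (rule ccontr)
      assume Pk: "P k" and "\<not> k < l"
      then have "replicate k True = u @ replicate (k - l) True"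
        by (simp add: u_def replicate_add[symmetric])
      then have "NL (sub t (replicate k True)) \<le> NL (sub t u)"
        using NL_sub_le by (simp add: sub_append)
      then show False using Pk nh unfolding P_def heavy_def by simp
    qed
    have P0: "P 0" using NLt n2 by (simp add: P_def heavy_def alpha_def)
    have "P (Greatest P)" by (rule GreatestI_nat[of P 0 l]) (use P0 mono in force)+
    then have "Greatest P < l" by (rule mono)
    then show False using lf unfolding rm_f_def P_def by simp
  qed
  have NLR: "real (NL R) \<ge> real n / 12"
  proof -
    have "ordered (sub t u)" using ordered_sub[OF ord] .
    then have "NL L \<le> NL R" using su by simp
    moreover have "real (NL L + NL R) \<ge> real n / 6 + 1" using heavy_u su by (simp add: heavy_def alpha_def)
    ultimately show ?thesis by linarith
  qed
  obtain l' where l': "l = Suc l'" using l1 by (cases l) auto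
  obtain w0 L0 w1 R0 where t0: "t = Node w0 L0 w1 R0"
    using vu by (cases t) (auto simp: u_def l')
  have uR0: "leaves (sub t u) \<subseteq> leaves R0"
    using leaves_sub[of R0] by (simp add: t0 u_def l')
  obtain wa A wb B where sp: "sub t p = Node wa A wb B"
    using int by (cases "sub t p") (auto simp: p_def)
  have vpp: "valid_pos t p" using vp by (simp add: p_def)
  have spL: "sub t p = sub L q" using su by (simp add: p_eq sub_append)
  have pL: "leaves (sub t p) \<subseteq> leaves L" using leaves_sub[of L q] spL by simp
  define x0 where "x0 = hd (leafl L0)"
  define y0 where "y0 = hd (leafl L)"
  define Z where "Z = leaves R"
  define a0 where "a0 = hd (leafl A)"
  define b0 where "b0 = hd (leafl B)"
  have x0: "x0 \<in> leaves L0" by (simp add: x0_def leaves_def)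
  have y0: "y0 \<in> leaves L" by (simp add: y0_def leaves_def)
  have a0: "a0 \<in> leaves A" by (simp add: a0_def leaves_def)
  have b0: "b0 \<in> leaves B" by (simp add: b0_def leaves_def)
  have a0L: "a0 \<in> leaves L" and b0L: "b0 \<in> leaves L" using a0 b0 pL sp by auto
  have y0R0: "y0 \<in> leaves R0" and ZR0: "Z \<subseteq> leaves R0" using y0 uR0 su by (auto simp: Z_def)
  have dis0: "leaves L0 \<inter> leaves R0 = {}" using disj_Node[of w0 L0 w1 R0] dist t0 by simp
  have distu: "distinct (leafl (sub t u))" using distinct_sub[OF dist] .
  have disLR: "leaves L \<inter> leaves R = {}" using disj_Node distu su by metis
  have distp: "distinct (leafl (sub t p))" using distinct_sub[OF dist] .
  have disAB: "leaves A \<inter> leaves B = {}" using disj_Node distp sp by metis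
  define hu where "hu = 1 - pathw t u"
  define hv where "hv = 1 - pathw t p"
  have hv_eq: "height_at t p = hv" unfolding hv_def by (rule height_at_eq[OF dist rd vpp])
  have wsu: "\<forall>w \<in> set (weights (sub t u)). w \<ge> 0" using wnn weights_sub[of t u] by auto
  have hu_le: "hu \<le> 1" using pathw_nonneg[OF wnn] by (simp add: hu_def)
  have hv_le: "hv \<le> hu"
    using pathw_nonneg[OF wsu, of "False # q"] by (simp add: hu_def hv_def p_eq pathw_append)
  have hv_ge: "hv \<ge> 0"
  proof -
    have "rootdist (sub t p) a0 = hv"
      unfolding hv_def by (rule rootdist_const[OF dist rd vpp]) (use a0 sp in auto)
    moreover have "rootdist (sub t p) a0 \<ge> 0"
      by (rule rootdist_nonneg) (use wnn weights_sub[of t p] in auto)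
    ultimately show ?thesis by simp
  qed
  have hu_pos: "hu > 0"
  proof -
    define z where "z = hd (leafl R)"
    have z: "z \<in> leaves R" by (simp add: z_def leaves_def)
    have "rootdist (sub t u) z = hu"
      unfolding hu_def by (rule rootdist_const[OF dist rd vu]) (use z su in auto)
    moreover have "rootdist (sub t u) z = wr + rootdist R z" using z disLR su by auto
    moreover have "rootdist R z \<ge> 0"
      by (rule rootdist_nonneg) (use wnn weights_sub[of t u] su in auto)
    moreover have "wr > 0" using wpos weights_sub[of t u] su by auto
    ultimately show ?thesis by linarith
  qed
  have d_root: "dist_t t a b = 2 \<and> dist_t t b a = 2" if "a \<in> leaves L0" "b \<in> leaves R0" for a b
    using lca_dist[OF dist rd, of "[]" w0 L0 w1 R0 a b] that t0 by simp
  have d_u: "dist_t t a b = 2 * hu \<and> dist_t t b a = 2 * hu" if "a \<in> leaves L" "b \<in> leaves R" for a b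
    using lca_dist[OF dist rd vu su that] by (simp add: hu_def)
  have d_v: "dist_t t a0 b0 = 2 * hv \<and> dist_t t b0 a0 = 2 * hv"
    using lca_dist[OF dist rd vpp sp a0 b0] by (simp add: hv_def)
  have p1: "pmf (triple_pmf t {x0, y0, z}) ({x0, y0, z} - {x0}) = 1 / (hu + 2)" if z: "z \<in> Z" for z
  proof -
    have ne: "y0 \<noteq> z" "y0 \<noteq> x0" "z \<noteq> x0"
      using z y0 disLR x0 y0R0 ZR0 dis0 by (auto simp: Z_def)
    have S: "{x0, y0, z} = {y0, z, x0}" "{x0, y0, z} - {x0} = {y0, z}" using ne by auto
    have "pmf (triple_pmf t {y0, z, x0}) {y0, z} = (2 + 2) / (2 * (2 * hu + 2 + 2))"
      by (rule triple_prob) (use ne d_root[OF x0 y0R0] d_root[OF x0, of z] ZR0 z d_u[OF y0, of z] hu_pos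
          in \<open>auto simp: Z_def\<close>)
    then show ?thesis unfolding S(2) unfolding S(1) using hu_pos by (simp add: field_simps)
  qed
  have p2: "pmf (triple_pmf t {a0, b0, z}) {a0, b0} = hu / (hv + 2 * hu)" if z: "z \<in> Z" for z
  proof -
    have ne: "a0 \<noteq> b0" "a0 \<noteq> z" "b0 \<noteq> z"
      using z a0 b0 disAB a0L b0L disLR by (auto simp: Z_def)
    have "pmf (triple_pmf t {a0, b0, z}) {a0, b0} = (2 * hu + 2 * hu) / (2 * (2 * hv + 2 * hu + 2 * hu))"
      by (rule triple_prob) (use ne d_v d_u[OF a0L, of z] d_u[OF b0L, of z] z hu_pos hv_ge
          in \<open>auto simp: Z_def\<close>)
    then show ?thesis using hu_pos hv_ge by (simp add: field_simps)
  qed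
  define I1 where "I1 = (\<lambda>z. {x0, y0, z}) ` Z"
  define I2 where "I2 = (\<lambda>z. {a0, b0, z}) ` Z"
  have finZ: "finite Z" by (simp add: Z_def leaves_def)
  have Zne: "Z \<noteq> {}" by (simp add: Z_def leaves_def)
  have cardZ: "card Z = NL R"
    using distinct_card[OF distinct_sub[OF distu, of "[True]"]] su by (simp add: Z_def leaves_def NL_def)
  have leavesR_t: "Z \<subseteq> {0..<n}" using ZR0 lv t0 by auto
  have x0t: "x0 \<in> {0..<n}" and y0t: "y0 \<in> {0..<n}" using x0 y0R0 lv t0 by auto
  have a0t: "a0 \<in> {0..<n}" and b0t: "b0 \<in> {0..<n}" using a0L b0L uR0 su lv t0 by auto
  have ne1: "y0 \<noteq> z \<and> y0 \<noteq> x0 \<and> z \<noteq> x0" if z: "z \<in> Z" for z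
      using z y0 disLR x0 y0R0 ZR0 dis0 by (auto simp: Z_def)
  have ne2: "a0 \<noteq> b0 \<and> a0 \<noteq> z \<and> b0 \<noteq> z" if z: "z \<in> Z" for z
      using z a0 b0 disAB a0L b0L disLR by (auto simp: Z_def)
  have nZ: "x0 \<notin> Z" "y0 \<notin> Z" "a0 \<notin> Z" "b0 \<notin> Z" "x0 \<noteq> y0" "a0 \<noteq> b0"
    using ZR0 dis0 x0 y0 disLR a0L b0L a0 b0 disAB y0R0 by (auto simp: Z_def)
  have I1t: "I1 \<subseteq> triples n"
    using nZ ne1 leavesR_t x0t y0t by (auto simp: I1_def triples_def card_insert_if)
  have I2t: "I2 \<subseteq> triples n"
    using nZ ne2 leavesR_t a0t b0t by (auto simp: I2_def triples_def card_insert_if)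
  have cI1: "card I1 = card Z"
    unfolding I1_def by (rule card_image) (use ne1 in \<open>auto simp: inj_on_def\<close>)
  have cI2: "card I2 = card Z"
    unfolding I2_def
  proof (rule card_image, rule inj_onI)
    fix x y assume xy: "x \<in> Z" "y \<in> Z" "{a0, b0, x} = {a0, b0, y}"
    then have "x \<in> {a0, b0, y}" by blast
    then show "x = y" using ne2[OF xy(1)] by auto
  qed
  have cZ: "real (card Z) \<ge> real n / 12" using NLR cardZ by simp
  have expb: "2 * exp (- 2 * real (card Z) * \<delta>\<^sup>2) \<le> 2 * exp (- 2 * (real n / 12) * \<delta>\<^sup>2)"
  proof -
    have "real n / 12 * \<delta>\<^sup>2 \<le> real (card Z) * \<delta>\<^sup>2" by (rule mult_right_mono) (use cZ in auto)
    then show ?thesis by simp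
  qed
  define E1 where "E1 = {Q. \<delta> \<le> \<bar>est I1 (\<lambda>S. S - {x0}) Q - 1 / (hu + 2)\<bar>}"
  define E2 where "E2 = {Q. \<delta> \<le> \<bar>est I2 (\<lambda>S. {a0, b0}) Q - hu / (hv + 2 * hu)\<bar>}"
  have pE1: "measure_pmf.prob (outcome_pmf t n) E1 \<le> 2 * exp (- 2 * (real n / 12) * \<delta>\<^sup>2)"
  proof -
    have "measure_pmf.prob (outcome_pmf t n) E1 \<le> 2 * exp (- 2 * real (card I1) * \<delta>\<^sup>2)"
      unfolding E1_def by (rule conc[OF I1t]) (use Zne p1 d in \<open>auto simp: I1_def\<close>)
    then show ?thesis unfolding cI1 using expb by (rule order_trans)
  qed
  have pE2: "measure_pmf.prob (outcome_pmf t n) E2 \<le> 2 * exp (- 2 * (real n / 12) * \<delta>\<^sup>2)"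
  proof -
    have "measure_pmf.prob (outcome_pmf t n) E2 \<le> 2 * exp (- 2 * real (card I2) * \<delta>\<^sup>2)"
      unfolding E2_def by (rule conc[OF I2t]) (use Zne p2 d in \<open>auto simp: I2_def\<close>)
    then show ?thesis unfolding cI2 using expb by (rule order_trans)
  qed
  have alg_eq: "alg0 (topology t) Q p =
     (1 / est I2 (\<lambda>S. {a0, b0}) Q - 2) * (1 / est I1 (\<lambda>S. S - {x0}) Q - 2)" for Q
  proof -
    have tw: "takeWhile id p = u" unfolding p_def u_def by (rule tw_rep)
    have s1: "sub t [False] = L0" by (simp add: t0)
    have s2: "sub t (u @ [False]) = L" "sub t (u @ [True]) = R" by (simp_all add: sub_append su)
    have s3: "sub t (p @ [False]) = A" "sub t (p @ [True]) = B" by (simp_all add: sub_append sp)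
    show ?thesis
      unfolding alg0_def Let_def tw topology_def topo_sub topo_leafl leaves_def[of "map_btree _ _"]
      by (simp add: s1 s2 s3 x0_def y0_def Z_def a0_def b0_def I1_def I2_def leaves_def)
  qed
  have sub: "UNIV - (E1 \<union> E2) \<subseteq> {Q. \<bar>alg0 (topology t) Q p - height_at t p\<bar> \<le> 36 * \<delta>}"
  proof
    fix Q assume "Q \<in> UNIV - (E1 \<union> E2)"
    then have m1: "\<bar>est I1 (\<lambda>S. S - {x0}) Q - 1 / (hu + 2)\<bar> < \<delta>"
      and m2: "\<bar>est I2 (\<lambda>S. {a0, b0}) Q - hu / (hv + 2 * hu)\<bar> < \<delta>"
      by (auto simp: E1_def E2_def)
    show "Q \<in> {Q. \<bar>alg0 (topology t) Q p - height_at t p\<bar> \<le> 36 * \<delta>}"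
      using prod_err[OF hu_pos hu_le hv_ge hv_le d m1 m2] by (simp add: alg_eq hv_eq)
  qed
  have "1 - 4 * exp (- 2 * (real n / 12) * \<delta>\<^sup>2) \<le> 1 - measure_pmf.prob (outcome_pmf t n) (E1 \<union> E2)"
    using measure_Un_le[of E1 "measure_pmf (outcome_pmf t n)" E2] pE1 pE2 by simp
  also have "\<dots> = measure_pmf.prob (outcome_pmf t n) (UNIV - (E1 \<union> E2))"
    using measure_pmf.prob_compl[of "E1 \<union> E2" "outcome_pmf t n"] by simp
  also have "\<dots> \<le> measure_pmf.prob (outcome_pmf t n) {Q. \<bar>alg0 (topology t) Q p - height_at t p\<bar> \<le> 36 * \<delta>}"
    by (rule measure_pmf.finite_measure_mono[OF sub]) simp
  finally show ?thesis by (simp add: p_def)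
qed




theorem lemma8:
  "\<exists>\<tau>\<^sub>0 > 0. \<forall>\<tau> \<ge> \<tau>\<^sub>0. \<exists>C > 0. \<exists>alg :: unit btree \<Rightarrow> (nat set \<Rightarrow> nat set) \<Rightarrow> bool list \<Rightarrow> real.
     \<forall>\<epsilon> > 0. \<exists>N. \<forall>n \<ge> N. \<forall>(t :: real btree) l q.
       distinct (leafl t) \<and> leaves t = {0..<n} \<and> ordered t \<and>
       (\<forall>a \<in> leaves t. rootdist t a = 1) \<and>
       (\<forall>w \<in> set (weights t). w \<ge> \<tau> * ln (real n) / sqrt (real n)) \<and>
       1 \<le> l \<and> l \<le> rm_f t n \<and>
       valid_pos t (replicate l True @ False # q) \<and>
       is_internal (sub t (replicate l True @ False # q))
       \<longrightarrow>
       measure_pmf.prob (outcome_pmf t n)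
         {Q. \<bar>alg (topology t) Q (replicate l True @ False # q)
               - height_at t (replicate l True @ False # q)\<bar>
             \<le> C * (1 / alpha) * sqrt (ln (real n) / real n)} \<ge> 1 - \<epsilon>"
proof (rule exI[of _ "1::real"], intro conjI allI impI)
  fix \<tau> :: real assume tau: "\<tau> \<ge> 1"
  show "\<exists>C>0. \<exists>alg :: unit btree \<Rightarrow> (nat set \<Rightarrow> nat set) \<Rightarrow> bool list \<Rightarrow> real.
     \<forall>\<epsilon> > 0. \<exists>N. \<forall>n \<ge> N. \<forall>(t :: real btree) l q.
       distinct (leafl t) \<and> leaves t = {0..<n} \<and> ordered t \<and>
       (\<forall>a \<in> leaves t. rootdist t a = 1) \<and>
       (\<forall>w \<in> set (weights t). w \<ge> \<tau> * ln (real n) / sqrt (real n)) \<and>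
       1 \<le> l \<and> l \<le> rm_f t n \<and>
       valid_pos t (replicate l True @ False # q) \<and>
       is_internal (sub t (replicate l True @ False # q))
       \<longrightarrow>
       measure_pmf.prob (outcome_pmf t n)
         {Q. \<bar>alg (topology t) Q (replicate l True @ False # q)
               - height_at t (replicate l True @ False # q)\<bar>
             \<le> C * (1 / alpha) * sqrt (ln (real n) / real n)} \<ge> 1 - \<epsilon>"
  proof (rule exI[of _ "6::real"], rule conjI, simp, rule exI[of _ alg0], intro allI impI)
    fix \<epsilon> :: real assume eps: "\<epsilon> > 0"
    have ev: "eventually (\<lambda>n. 4 * exp (- (ln (real n) / 6)) < \<epsilon> \<and>
                 sqrt (ln (real n) / real n) < 1/12 \<and> n \<ge> 2) sequentially"
      using order_tendstoD(2)[OF lim1 eps] order_tendstoD(2)[OF lim2, of "1/12"]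
        eventually_ge_at_top[of "2::nat"]
      by (intro eventually_conj) auto
    then obtain N where N: "\<And>n. n \<ge> N \<Longrightarrow> 4 * exp (- (ln (real n) / 6)) < \<epsilon> \<and>
                 sqrt (ln (real n) / real n) < 1/12 \<and> n \<ge> 2"
      unfolding eventually_sequentially by blast
    show "\<exists>N. \<forall>n \<ge> N. \<forall>(t :: real btree) l q.
       distinct (leafl t) \<and> leaves t = {0..<n} \<and> ordered t \<and>
       (\<forall>a \<in> leaves t. rootdist t a = 1) \<and>
       (\<forall>w \<in> set (weights t). w \<ge> \<tau> * ln (real n) / sqrt (real n)) \<and>
       1 \<le> l \<and> l \<le> rm_f t n \<and>
       valid_pos t (replicate l True @ False # q) \<and>
       is_internal (sub t (replicate l True @ False # q))
       \<longrightarrow>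
       measure_pmf.prob (outcome_pmf t n)
         {Q. \<bar>alg0 (topology t) Q (replicate l True @ False # q)
               - height_at t (replicate l True @ False # q)\<bar>
             \<le> 6 * (1 / alpha) * sqrt (ln (real n) / real n)} \<ge> 1 - \<epsilon>"
    proof (intro exI[of _ N] allI impI)
      fix n t l q assume nN: "N \<le> n" and H: "distinct (leafl t) \<and> leaves t = {0..<n} \<and> ordered t \<and>
       (\<forall>a \<in> leaves t. rootdist t a = 1) \<and>
       (\<forall>w \<in> set (weights t). w \<ge> \<tau> * ln (real n) / sqrt (real n)) \<and>
       1 \<le> l \<and> l \<le> rm_f t n \<and>
       valid_pos t (replicate l True @ False # q) \<and>
       is_internal (sub t (replicate l True @ False # q))"
      define \<delta> where "\<delta> = sqrt (ln (real n) / real n)"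
      have Nn: "4 * exp (- (ln (real n) / 6)) < \<epsilon>" "\<delta> < 1/12" "n \<ge> 2"
        using N[OF nN] by (auto simp: \<delta>_def)
      have lnn: "ln (real n) \<ge> 0" using Nn(3) by simp
      have d0: "\<delta> \<ge> 0" using lnn by (simp add: \<delta>_def)
      have dsq: "\<delta>\<^sup>2 = ln (real n) / real n" unfolding \<delta>_def using lnn by (simp add: divide_nonneg_nonneg)
      have ex: "- 2 * (real n / 12) * \<delta>\<^sup>2 = - (ln (real n) / 6)"
        unfolding dsq using Nn(3) by (simp add: field_simps)
      have m: "measure_pmf.prob (outcome_pmf t n)
         {Q. \<bar>alg0 (topology t) Q (replicate l True @ False # q)
               - height_at t (replicate l True @ False # q)\<bar> \<le> 36 * \<delta>}
         \<ge> 1 - 4 * exp (- 2 * (real n / 12) * \<delta>\<^sup>2)"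
        by (rule main[where t=t and n=n and l=l and q=q and \<tau>=\<tau> and \<delta>=\<delta>]) (use H Nn tau d0 in auto)
      have c: "6 * (1 / alpha) * sqrt (ln (real n) / real n) = 36 * \<delta>"
        by (simp add: alpha_def \<delta>_def)
      show "measure_pmf.prob (outcome_pmf t n)
         {Q. \<bar>alg0 (topology t) Q (replicate l True @ False # q)
               - height_at t (replicate l True @ False # q)\<bar>
             \<le> 6 * (1 / alpha) * sqrt (ln (real n) / real n)} \<ge> 1 - \<epsilon>"
        unfolding c using m Nn(1) unfolding ex by linarith
    qed
  qed
qed simp


end
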